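(* Let $\{(Y_i,\tilde Y_i)\}_{i\in\mathbb Z}$ be i.i.d. with law $P_{Y\tilde Y}$, assume $I(Y;\tilde Y)>0$, and let $E_+>0$ be a constant such that for every $m\in\mathbb N_+$ and any i.i.d. pairs $(U_i,V_i)\sim P_Y\otimes P_Y$ one has $\mathbb P[\sum_{i=1}^m\log\lambda(U_i,V_i)>0]\le\exp[-mE_+]$ (such a constant exists). Then for every integer $k\ge1$ and every $t\in\mathbb N_+$, \[ \mathbb P\!\left[\sum_{i=1}^t\log\lambda(Y_{k+i},\tilde Y_i)>0\right]\le2\exp\!\left[-(t-1)\frac{E_+}{2}\right]. \]
   Context: $\mathcal X,\mathcal Y$ finite alphabets; logs base $|\mathcal X|$ and $\exp$ in the same base. Given $P_X$ and a channel $P_{Y\mid X}$: $P_Y$ is the $Y$-marginal of $P_X\otimes P_{Y\mid X}$ (assume $P_Y(y)>0$ for all $y$), $P_{Y\tilde Y}(y,\tilde y):=\sum_xP_X(x)P_{Y\mid X}(y\mid x)P_{Y\mid X}(\tilde y\mid x)$ (note its $\tilde Y$-marginal is also $P_Y$), $\lambda(y,\tilde y):=P_{Y\tilde Y}(y,\tilde y)/(P_Y(y)P_Y(\tilde y))$, and $I(Y;\tilde Y)$ is the mutual information under $P_{Y\tilde Y}$. *)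

theory Defs
  imports "HOL-Probability.Probability"
begin

text \<open>Setting: finite input alphabet 'x, finite output alphabet 'y, input law PX,
  channel W (W x is the law of Y given X = x). Logarithms/exponentials are to base
  card('x).\<close>

definition PY :: "'x pmf \<Rightarrow> ('x \<Rightarrow> 'y pmf) \<Rightarrow> 'y pmf" where
  "PY PX W = bind_pmf PX W"

definition PYY :: "'x pmf \<Rightarrow> ('x \<Rightarrow> 'y pmf) \<Rightarrow> ('y \<times> 'y) pmf" where
  "PYY PX W = bind_pmf PX (\<lambda>x. pair_pmf (W x) (W x))"

definition lam :: "'x pmf \<Rightarrow> ('x \<Rightarrow> 'y pmf) \<Rightarrow> 'y \<Rightarrow> 'y \<Rightarrow> real" where
  "lam PX W y y' = pmf (PYY PX W) (y, y') / (pmf (PY PX W) y * pmf (PY PX W) y')"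

definition logbase :: "'x itself \<Rightarrow> real" where
  "logbase _ = real CARD('x)"

definition loglam :: "'x pmf \<Rightarrow> ('x \<Rightarrow> 'y pmf) \<Rightarrow> 'y \<Rightarrow> 'y \<Rightarrow> ereal" where
  "loglam PX W y y' =
     (if lam PX W y y' = 0 then -\<infinity> else ereal (log (logbase TYPE('x)) (lam PX W y y')))"

definition MI :: "'x pmf \<Rightarrow> ('x \<Rightarrow> 'y pmf) \<Rightarrow> real" where
  "MI PX W = (\<Sum>p\<in>{p. pmf (PYY PX W) p > 0}.
       pmf (PYY PX W) p * log (logbase TYPE('x)) (lam PX W (fst p) (snd p)))"

end

theory Submission imports Defs begin

lemma map_Pi_pairs:
  fixes Q :: "('a \<times> 'b) pmf" and sa sb :: "nat \<Rightarrow> nat"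
  assumes fI: "finite I" and fJ: "finite J" and i1: "inj_on sa J" and i2: "inj_on sb J"
    and sub1: "sa ` J \<subseteq> I" and sub2: "sb ` J \<subseteq> I" and dis: "sa ` J \<inter> sb ` J = {}"
  shows "map_pmf (\<lambda>\<omega> j. if j \<in> J then (fst (\<omega> (sa j)), snd (\<omega> (sb j))) else undefined)
           (Pi_pmf I dflt (\<lambda>_. Q))
       = Pi_pmf J undefined (\<lambda>_. pair_pmf (map_pmf fst Q) (map_pmf snd Q))"
proof (rule pmf_eqI)
  fix x :: "nat \<Rightarrow> 'a \<times> 'b"
  define F where "F = (\<lambda>\<omega> j. if j \<in> J then (fst (\<omega> (sa j)), snd (\<omega> (sb j))) else (undefined::'a\<times>'b))"
  show "pmf (map_pmf F (Pi_pmf I dflt (\<lambda>_. Q))) x =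
        pmf (Pi_pmf J undefined (\<lambda>_. pair_pmf (map_pmf fst Q) (map_pmf snd Q))) x"
  proof (cases "\<exists>j. j \<notin> J \<and> x j \<noteq> undefined")
    case True
    then have "F -` {x} = {}" by (auto simp: F_def fun_eq_iff)
    then have "pmf (map_pmf F (Pi_pmf I dflt (\<lambda>_. Q))) x = 0"
      by (simp add: pmf_map)
    moreover have "pmf (Pi_pmf J undefined (\<lambda>_. pair_pmf (map_pmf fst Q) (map_pmf snd Q))) x = 0"
      using True fJ by (intro pmf_Pi_outside) auto
    ultimately show ?thesis by simp
  next
    case False
    define B where "B = (\<lambda>i. if i \<in> sa ` J then {z. fst z = fst (x (inv_into J sa i))}
        else if i \<in> sb ` J then {z. snd z = snd (x (inv_into J sb i))} else UNIV)"
    have pre: "F -` {x} = Pi I B"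
    proof (intro equalityI subsetI)
      fix \<omega> assume "\<omega> \<in> F -` {x}"
      then have h: "\<And>j. j \<in> J \<Longrightarrow> fst (\<omega> (sa j)) = fst (x j) \<and> snd (\<omega> (sb j)) = snd (x j)"
      proof -
        fix j assume j: "j \<in> J"
        have "F \<omega> j = x j" using \<open>\<omega> \<in> F -` {x}\<close> by simp
        then show "fst (\<omega> (sa j)) = fst (x j) \<and> snd (\<omega> (sb j)) = snd (x j)"
          using j unfolding F_def by (metis fst_conv snd_conv)
      qed
      show "\<omega> \<in> Pi I B"
      proof
        fix i assume "i \<in> I"
        show "\<omega> i \<in> B i"
        proof (cases "i \<in> sa ` J")
          case True
          then obtain j where "j \<in> J" "i = sa j" by auto
          then show ?thesis using h[of j] i1 True by (auto simp: B_def)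
        next
          case f1: False
          show ?thesis
          proof (cases "i \<in> sb ` J")
            case True
            then obtain j where "j \<in> J" "i = sb j" by auto
            then show ?thesis using h[of j] i2 True f1 by (auto simp: B_def)
          qed (use f1 in \<open>auto simp: B_def\<close>)
        qed
      qed
    next
      fix \<omega> assume w: "\<omega> \<in> Pi I B"
      have "F \<omega> = x"
      proof
        fix j show "F \<omega> j = x j"
        proof (cases "j \<in> J")
          case True
          have a: "\<omega> (sa j) \<in> B (sa j)" using w sub1 True by auto
          have b: "\<omega> (sb j) \<in> B (sb j)" using w sub2 True by auto
          have n2: "sb j \<notin> sa ` J" using dis True by auto
          have "fst (\<omega> (sa j)) = fst (x j)" using a True i1 by (auto simp: B_def)
          moreover have "snd (\<omega> (sb j)) = snd (x j)" using b n2 True i2 by (auto simp: B_def)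
          ultimately show ?thesis using True by (simp add: F_def prod_eq_iff)
        next
          case False then show ?thesis using \<open>\<not> (\<exists>j. j \<notin> J \<and> x j \<noteq> undefined)\<close>
            by (auto simp: F_def)
        qed
      qed
      then show "\<omega> \<in> F -` {x}" by simp
    qed
    have "pmf (map_pmf F (Pi_pmf I dflt (\<lambda>_. Q))) x = measure_pmf.prob (Pi_pmf I dflt (\<lambda>_. Q)) (Pi I B)"
      by (simp add: pmf_map pre)
    also have "\<dots> = (\<Prod>i\<in>I. measure_pmf.prob Q (B i))"
      using fI by (rule measure_Pi_pmf_Pi)
    also have "\<dots> = (\<Prod>i\<in>sa ` J \<union> sb ` J. measure_pmf.prob Q (B i))"
      using fI sub1 sub2 by (intro prod.mono_neutral_right) (auto simp: B_def)
    also have "\<dots> = (\<Prod>i\<in>sa ` J. measure_pmf.prob Q (B i)) * (\<Prod>i\<in>sb ` J. measure_pmf.prob Q (B i))"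
      using fJ dis by (intro prod.union_disjoint) auto
    also have "(\<Prod>i\<in>sa ` J. measure_pmf.prob Q (B i)) = (\<Prod>j\<in>J. pmf (map_pmf fst Q) (fst (x j)))"
      using i1 by (subst prod.reindex) (auto simp: B_def pmf_map vimage_def intro!: prod.cong arg_cong2[where f=measure])
    also have "(\<Prod>i\<in>sb ` J. measure_pmf.prob Q (B i)) = (\<Prod>j\<in>J. pmf (map_pmf snd Q) (snd (x j)))"
    proof -
      have "\<And>j. j \<in> J \<Longrightarrow> B (sb j) = {z. snd z = snd (x j)}"
      proof -
        fix j assume j: "j \<in> J"
        then have "sb j \<notin> sa ` J" using dis by auto
        then show "B (sb j) = {z. snd z = snd (x j)}" using j i2 by (auto simp: B_def)
      qed
      then show ?thesis
        using i2 by (subst prod.reindex) (auto simp: pmf_map vimage_def intro!: prod.cong arg_cong2[where f=measure])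
    qed
    also have "(\<Prod>j\<in>J. pmf (map_pmf fst Q) (fst (x j))) * (\<Prod>j\<in>J. pmf (map_pmf snd Q) (snd (x j)))
        = (\<Prod>j\<in>J. pmf (pair_pmf (map_pmf fst Q) (map_pmf snd Q)) (x j))"
      by (simp add: prod.distrib[symmetric]) (metis (no_types, lifting) pmf_pair prod.collapse)
    also have "\<dots> = pmf (Pi_pmf J undefined (\<lambda>_. pair_pmf (map_pmf fst Q) (map_pmf snd Q))) x"
      using fJ False by (intro pmf_Pi'[symmetric]) auto
    finally show ?thesis by (simp add: F_def)
  qed
qed

lemma map_fst_PYY: "map_pmf fst (PYY PX W) = PY PX W"
  by (simp add: PYY_def PY_def map_bind_pmf map_fst_pair_pmf)

lemma map_snd_PYY: "map_pmf snd (PYY PX W) = PY PX W"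
  by (simp add: PYY_def PY_def map_bind_pmf map_snd_pair_pmf)

definition col :: "nat \<Rightarrow> nat \<Rightarrow> bool" where
  "col k i = (if odd k then even i else even ((i-1) div k + (i-1)))"

lemma col_shift: assumes "k \<ge> 1" "i \<ge> 1" shows "col k (i+k) \<noteq> col k i"
proof (cases "odd k")
  case True then show ?thesis by (simp add: col_def)
next
  case False
  have e: "i + k - 1 = (i - 1) + k" using assms by simp
  obtain i' where i': "i = Suc i'" using assms by (cases i) auto
  have "(i + k - 1) div k = (i-1) div k + 1" 
    using div_add_self2[of k i'] assms unfolding i' by simp
  then show ?thesis using False e by (simp add: col_def)
qed

lemma even_div_step: fixes k j :: nat assumes "even k" "k \<ge> 1" shows "(2*j+1) div k = (2*j) div k"
proof -
  define q r where "q = (2*j) div k" and "r = (2*j) mod k"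
  have qr: "2*j = q*k + r" "r < k" using assms by (simp_all add: q_def r_def)
  have "even (q*k)" using assms by simp
  moreover have "even (q*k + r)" using qr(1) by (metis dvd_triv_left)
  ultimately have "even r" by (simp add: dvd_add_right_iff)
  then have "r + 1 < k" using qr assms by (metis Suc_eq_plus1 Suc_lessI even_Suc)
  moreover have "2*j+1 = (r+1) + q*k" using qr(1) by simp
  ultimately have "(2*j+1) div k = q" 
    using div_mult_self1[of k "r+1" q] div_less[of "r+1" k] assms by simp
  then show ?thesis by (simp add: q_def)
qed

lemma col_pair: assumes "k \<ge> 1" shows "col k (2*j+1) \<noteq> col k (2*j+2)"
proof (cases "odd k")
  case True then show ?thesis by (simp add: col_def)
next
  case False
  have "(2*j+2 - 1) = 2*j+1" by simp
  then show ?thesis using False even_div_step[OF _ assms, of j] by (simp add: col_def)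
qed

lemma card_half:
  assumes "\<And>j. P (2*j+1) \<noteq> P (2*j+2)"
  shows "t div 2 \<le> card {i\<in>{1..t}. P i}"
proof -
  define h where "h j = (if P (2*j+1) then 2*j+1 else 2*j+2)" for j :: nat
  have "inj_on h {..<t div 2}"
  proof (rule inj_onI)
    fix a b assume "h a = h b"
    then have "(h a - 1) div 2 = (h b - 1) div 2" by simp
    moreover have "\<And>j. (h j - 1) div 2 = j" by (simp add: h_def)
    ultimately show "a = b" by simp
  qed
  moreover have "h ` {..<t div 2} \<subseteq> {i\<in>{1..t}. P i}"
    using assms by (auto simp: h_def)
  ultimately have "card {..<t div 2} \<le> card {i\<in>{1..t}. P i}"
    by (intro card_inj_on_le) auto
  then show ?thesis by simp
qed

lemma class_bound:
  fixes PX :: "('x::finite) pmf" and W :: "'x \<Rightarrow> ('y::finite) pmf" and Eplus :: real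
    and C :: "nat set" and k t :: nat
  assumes E_bound: "\<And>m::nat. m \<ge> 1 \<Longrightarrow>
        measure_pmf.prob (Pi_pmf {1..m} undefined (\<lambda>_. pair_pmf (PY PX W) (PY PX W)))
          {\<omega>. (\<Sum>i\<in>{1..m}. loglam PX W (fst (\<omega> i)) (snd (\<omega> i))) > 0}
        \<le> logbase TYPE('x) powr (- (real m * Eplus))"
    and C: "C \<subseteq> {1..t}" "C \<noteq> {}" "\<And>i. i \<in> C \<Longrightarrow> i + k \<notin> C"
  shows "measure_pmf.prob (Pi_pmf {1..k+t} undefined (\<lambda>_. PYY PX W))
          {\<omega>. (\<Sum>i\<in>C. loglam PX W (fst (\<omega> (k+i))) (snd (\<omega> i))) > 0}
        \<le> logbase TYPE('x) powr (- (real (card C) * Eplus))"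
proof -
  define m where "m = card C"
  have fC: "finite C" by (rule finite_subset[OF C(1)]) simp
  have "m \<noteq> 0" using fC C(2) m_def by simp
  then have m1: "m \<ge> 1" by simp
  obtain g where g: "bij_betw g {1..m} C" using ex_bij_betw_nat_finite_1[OF fC] m_def by blast
  define F where "F = (\<lambda>\<omega> j. if j \<in> {1..m} then (fst (\<omega> (k + g j)), snd (\<omega> (g j))) else (undefined::'y\<times>'y))"
  have ginj: "inj_on g {1..m}" and gim: "g ` {1..m} = C" using g by (auto simp: bij_betw_def)
  have gC: "\<And>j. j \<in> {1..m} \<Longrightarrow> g j \<in> C" using bij_betwE[OF g] by blast
  have p1: "inj_on (\<lambda>j. k + g j) {1..m}"
  proof (rule inj_onI)
    fix a b assume ab: "a \<in> {1..m}" "b \<in> {1..m}" "k + g a = k + g b"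
    then have "g a = g b" by simp
    then show "a = b" using inj_onD[OF ginj _ ab(1) ab(2)] by blast
  qed
  have p2: "(\<lambda>j. k + g j) ` {1..m} \<subseteq> {1..k+t}"
  proof
    fix x assume "x \<in> (\<lambda>j. k + g j) ` {1..m}"
    then obtain j where "j \<in> {1..m}" "x = k + g j" by blast
    then show "x \<in> {1..k+t}" using gC[of j] C(1) by auto
  qed
  have p3: "g ` {1..m} \<subseteq> {1..k+t}" using gC C(1) by fastforce
  have p4: "(\<lambda>j. k + g j) ` {1..m} \<inter> g ` {1..m} = {}"
  proof (rule ccontr)
    assume "(\<lambda>j. k + g j) ` {1..m} \<inter> g ` {1..m} \<noteq> {}"
    then obtain j j' where "j \<in> {1..m}" "j' \<in> {1..m}" "k + g j = g j'" by blast
    then show False using gC[of j] gC[of j'] C(3)[of "g j"] by (simp add: add.commute)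
  qed
  note L = map_Pi_pairs[where I="{1..k+t}" and J="{1..m}" and sa="\<lambda>j. k + g j" and sb=g
     and Q="PYY PX W" and dflt=undefined, OF _ _ p1 ginj p2 p3 p4]
  have mp0: "map_pmf F (Pi_pmf {1..k+t} undefined (\<lambda>_. PYY PX W))
      = Pi_pmf {1..m} undefined (\<lambda>_. pair_pmf (map_pmf fst (PYY PX W)) (map_pmf snd (PYY PX W)))"
    unfolding F_def by (rule L) simp_all
  have mp: "map_pmf F (Pi_pmf {1..k+t} undefined (\<lambda>_. PYY PX W))
      = Pi_pmf {1..m} undefined (\<lambda>_. pair_pmf (PY PX W) (PY PX W))"
    by (simp only: mp0 map_fst_PYY map_snd_PYY)
  have sets: "F -` {\<omega>. (\<Sum>i\<in>{1..m}. loglam PX W (fst (\<omega> i)) (snd (\<omega> i))) > 0}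
      = {\<omega>. (\<Sum>i\<in>C. loglam PX W (fst (\<omega> (k+i))) (snd (\<omega> i))) > 0}"
  proof -
    have "\<And>\<omega>. (\<Sum>i\<in>{1..m}. loglam PX W (fst (F \<omega> i)) (snd (F \<omega> i)))
        = (\<Sum>i\<in>C. loglam PX W (fst (\<omega> (k+i))) (snd (\<omega> i)))"
    proof -
      fix \<omega>
      have "(\<Sum>i\<in>{1..m}. loglam PX W (fst (F \<omega> i)) (snd (F \<omega> i)))
          = (\<Sum>i\<in>{1..m}. loglam PX W (fst (\<omega> (k + g i))) (snd (\<omega> (g i))))"
        by (intro sum.cong) (auto simp: F_def)
      also have "\<dots> = (\<Sum>i\<in>C. loglam PX W (fst (\<omega> (k+i))) (snd (\<omega> i)))"
        using sum.reindex_bij_betw[OF g, of "\<lambda>i. loglam PX W (fst (\<omega> (k+i))) (snd (\<omega> i))"] by simp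
      finally show "(\<Sum>i\<in>{1..m}. loglam PX W (fst (F \<omega> i)) (snd (F \<omega> i)))
        = (\<Sum>i\<in>C. loglam PX W (fst (\<omega> (k+i))) (snd (\<omega> i)))" .
    qed
    then show ?thesis by auto
  qed
  have "measure_pmf.prob (Pi_pmf {1..k+t} undefined (\<lambda>_. PYY PX W))
          {\<omega>. (\<Sum>i\<in>C. loglam PX W (fst (\<omega> (k+i))) (snd (\<omega> i))) > 0}
      = measure_pmf.prob (Pi_pmf {1..m} undefined (\<lambda>_. pair_pmf (PY PX W) (PY PX W)))
          {\<omega>. (\<Sum>i\<in>{1..m}. loglam PX W (fst (\<omega> i)) (snd (\<omega> i))) > 0}"
    unfolding mp[symmetric] measure_map_pmf sets ..
  also have "\<dots> \<le> logbase TYPE('x) powr (- (real m * Eplus))" using E_bound m1 by blast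
  finally show ?thesis by (simp add: m_def)
qed


lemma class_bound2:
  fixes PX :: "('x::finite) pmf" and W :: "'x \<Rightarrow> ('y::finite) pmf" and Eplus :: real
    and k t :: nat
  assumes E_bound: "\<And>m::nat. m \<ge> 1 \<Longrightarrow>
        measure_pmf.prob (Pi_pmf {1..m} undefined (\<lambda>_. pair_pmf (PY PX W) (PY PX W)))
          {\<omega>. (\<Sum>i\<in>{1..m}. loglam PX W (fst (\<omega> i)) (snd (\<omega> i))) > 0}
        \<le> logbase TYPE('x) powr (- (real m * Eplus))"
    and E_pos: "Eplus > 0"
    and Pshift: "\<And>i. i \<ge> 1 \<Longrightarrow> P (i + k) \<noteq> P i"
    and Ppair: "\<And>j. P (2*j+1) \<noteq> P (2*j+2)"
  shows "measure_pmf.prob (Pi_pmf {1..k+t} undefined (\<lambda>_. PYY PX W))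
          {\<omega>. (\<Sum>i\<in>{i\<in>{1..t}. P i}. loglam PX W (fst (\<omega> (k+i))) (snd (\<omega> i))) > 0}
        \<le> logbase TYPE('x) powr (- ((real t - 1) * Eplus / 2))"
proof (cases "{i\<in>{1..t}. P i} = {}")
  case True
  show ?thesis by (simp only: True) simp
next
  case False
  define C where "C = {i\<in>{1..t}. P i}"
  have b1: "logbase TYPE('x) \<ge> 1"
    by (simp add: logbase_def Suc_le_eq)
  have "measure_pmf.prob (Pi_pmf {1..k+t} undefined (\<lambda>_. PYY PX W))
          {\<omega>. (\<Sum>i\<in>C. loglam PX W (fst (\<omega> (k+i))) (snd (\<omega> i))) > 0}
        \<le> logbase TYPE('x) powr (- (real (card C) * Eplus))"
  proof (rule class_bound[OF E_bound])
    show "C \<subseteq> {1..t}" "C \<noteq> {}" using False by (auto simp: C_def)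
    show "\<And>i. i \<in> C \<Longrightarrow> i + k \<notin> C" using Pshift by (auto simp: C_def)
  qed
  also have "\<dots> \<le> logbase TYPE('x) powr (- ((real t - 1) * Eplus / 2))"
  proof (rule powr_mono[OF _ b1])
    have "t div 2 \<le> card C" unfolding C_def by (rule card_half[OF Ppair])
    then have "real t - 1 \<le> 2 * real (card C)" by linarith
    then have "(real t - 1) * Eplus \<le> 2 * real (card C) * Eplus"
      using E_pos by (intro mult_right_mono) auto
    then show "- (real (card C) * Eplus) \<le> - ((real t - 1) * Eplus / 2)" by simp
  qed
  finally show ?thesis by (simp add: C_def)
qed

theorem mainTheorem12:
  fixes PX :: "('x::finite) pmf" and W :: "'x \<Rightarrow> ('y::finite) pmf" and Eplus :: real
  assumes PY_pos: "\<And>y. pmf (PY PX W) y > 0"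
    and MI_pos: "MI PX W > 0"
    and E_pos: "Eplus > 0"
    and E_bound: "\<And>m::nat. m \<ge> 1 \<Longrightarrow>
        measure_pmf.prob (Pi_pmf {1..m} undefined (\<lambda>_. pair_pmf (PY PX W) (PY PX W)))
          {\<omega>. (\<Sum>i\<in>{1..m}. loglam PX W (fst (\<omega> i)) (snd (\<omega> i))) > 0}
        \<le> logbase TYPE('x) powr (- (real m * Eplus))"
  shows "\<forall>k::nat. \<forall>t::nat. k \<ge> 1 \<longrightarrow> t \<ge> 1 \<longrightarrow>
        measure_pmf.prob (Pi_pmf {1..k+t} undefined (\<lambda>_. PYY PX W))
          {\<omega>. (\<Sum>i\<in>{1..t}. loglam PX W (fst (\<omega> (k+i))) (snd (\<omega> i))) > 0}
        \<le> 2 * logbase TYPE('x) powr (- ((real t - 1) * Eplus / 2))"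
proof (intro allI impI)
  fix k t :: nat assume k: "k \<ge> 1" and t: "t \<ge> 1"
  define M where "M = Pi_pmf {1..k+t} undefined (\<lambda>_. PYY PX W)"
  define f where "f = (\<lambda>\<omega> i. loglam PX W (fst (\<omega> (k+i))) (snd (\<omega> i)))"
  define A where "A = {i\<in>{1..t}. col k i}"
  define B where "B = {i\<in>{1..t}. \<not> col k i}"
  define EA where "EA = {\<omega>. (\<Sum>i\<in>A. f \<omega> i) > 0}"
  define EB where "EB = {\<omega>. (\<Sum>i\<in>B. f \<omega> i) > 0}"
  have un: "{1..t} = A \<union> B" and dj: "A \<inter> B = {}" and fA: "finite A" and fB: "finite B"
    by (auto simp: A_def B_def)
  have sub: "{\<omega>. (\<Sum>i\<in>{1..t}. f \<omega> i) > 0} \<subseteq> EA \<union> EB"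
  proof
    fix \<omega> assume "\<omega> \<in> {\<omega>. (\<Sum>i\<in>{1..t}. f \<omega> i) > 0}"
    moreover have "(\<Sum>i\<in>{1..t}. f \<omega> i) = (\<Sum>i\<in>A. f \<omega> i) + (\<Sum>i\<in>B. f \<omega> i)"
      unfolding un by (rule sum.union_disjoint[OF fA fB dj])
    ultimately have "(\<Sum>i\<in>A. f \<omega> i) + (\<Sum>i\<in>B. f \<omega> i) > 0" by simp
    then have "(\<Sum>i\<in>A. f \<omega> i) > 0 \<or> (\<Sum>i\<in>B. f \<omega> i) > 0"
      by (metis add_nonpos_nonpos not_le)
    then show "\<omega> \<in> EA \<union> EB" by (auto simp: EA_def EB_def)
  qed
  have "measure_pmf.prob M {\<omega>. (\<Sum>i\<in>{1..t}. f \<omega> i) > 0} \<le> measure_pmf.prob M (EA \<union> EB)"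
    using sub by (rule measure_pmf.finite_measure_mono) simp
  also have "\<dots> \<le> measure_pmf.prob M EA + measure_pmf.prob M EB"
    by (rule measure_Un_le) simp_all
  also have "measure_pmf.prob M EA \<le> logbase TYPE('x) powr (- ((real t - 1) * Eplus / 2))"
    unfolding M_def EA_def A_def f_def
    by (rule class_bound2[OF E_bound E_pos]) (use col_shift[OF k] col_pair[OF k] in auto)
  also have "measure_pmf.prob M EB \<le> logbase TYPE('x) powr (- ((real t - 1) * Eplus / 2))"
    unfolding M_def EB_def B_def f_def
    by (rule class_bound2[OF E_bound E_pos]) (use col_shift[OF k] col_pair[OF k] in auto)
  finally show "measure_pmf.prob (Pi_pmf {1..k+t} undefined (\<lambda>_. PYY PX W))
          {\<omega>. (\<Sum>i\<in>{1..t}. loglam PX W (fst (\<omega> (k+i))) (snd (\<omega> i))) > 0}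
        \<le> 2 * logbase TYPE('x) powr (- ((real t - 1) * Eplus / 2))"
    by (simp add: M_def f_def)
qed

end
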